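(* Let $p$ be a prime and let $P$ be a no-signalling box with inputs and outputs in $\mathbb{Z}_p$ that satisfies information causality. Then for every integer $N$ with $1\le N\le p$ and every $c\in\mathbb{Z}_p$, $$\frac1p\sum_{k=0}^{p-1}\omega_p^{ck}\Big(\sum_{j=0}^{p-1}\mu_j\omega_p^{jk}\Big)^{N-1}\le T_p^{-1}\Big(\frac{N-1}{N}\log_2p\Big),$$ where $\omega_p=e^{2\pi i/p}$ and $\mu_j=\frac1{p^2}\sum_{x,y=0}^{p-1}\sum_{k=0}^{p-1}P(a=k,\,b=k-xy+j\mid x,y)$.
   Context: Let $p$ be a prime. All arithmetic on elements of $\mathbb{Z}_p$ is modulo $p$. A box is a conditional probability distribution $P(a,b\mid x,y)$ with $a,b,x,y\in\mathbb{Z}_p$. It is shared by Alice, who supplies $x$ and receives $a$, and Bob, who supplies $y$ and receives $b$. Different copies act independently. $P$ is no-signalling if $\sum_bP(a,b\mid x,y)$ does not depend on $y$ and $\sum_aP(a,b\mid x,y)$ does not depend on $x$. $P$ satisfies information causality if, for every $N\ge1$, every protocol of the following form satisfies $\sum_{i=0}^{N-1}I(x_i:b\mid y=i)\le\log_2p$. In the protocol: - Alice receives $\vec x=(x_0,\dots,x_{N-1})$ uniform in $\mathbb{Z}_p^N$, and Bob receives $y$ uniform in $\{0,\dots,N-1\}$, independent of $\vec x$. - They share randomness (independent of the inputs) and finitely many copies of $P$. - Alice's inputs to her ends of the boxes are functions of $\vec x$, the shared randomness, and her previously obtained outputs. - Alice sends a single message $q\in\mathbb{Z}_p$ to Bob,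 which is a function of $\vec x$, the randomness, and her outputs. - Bob's inputs to his ends of the boxes are functions of $y$, $q$, the shared randomness, and his previously obtained outputs. - Bob finally outputs $b\in\mathbb{Z}_p$. Here $I(x_i:b\mid y=i)$ is the Shannon mutual information (in bits) between $x_i$ and $b$ under the distribution conditioned on $y=i$. Let $h(x)=-x\log_2x-(1-x)\log_2(1-x)$ and $T_p(x)=h(x)+(1-x)\log_2(p-1)$. On $[1/p,1]$, $T_p$ decreases strictly from $\log_2p$ to $0$. $T_p^{-1}:[0,\log_2p]\to[1/p,1]$ denotes the inverse of this restriction. *)

theory Defs
  imports "HOL-Analysis.Analysis"
begin

text \<open>Elements of Z_p are represented by naturals below p.  A box is
  P a b x y = P(a,b | x,y).\<close>

definition tuples :: "nat \<Rightarrow> nat \<Rightarrow> nat list set" where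
  "tuples p n = {xs. set xs \<subseteq> {..<p} \<and> length xs = n}"

definition is_box :: "nat \<Rightarrow> (nat \<Rightarrow> nat \<Rightarrow> nat \<Rightarrow> nat \<Rightarrow> real) \<Rightarrow> bool" where
  "is_box p P \<longleftrightarrow>
     (\<forall>a<p. \<forall>b<p. \<forall>x<p. \<forall>y<p. 0 \<le> P a b x y) \<and>
     (\<forall>x<p. \<forall>y<p. (\<Sum>a<p. \<Sum>b<p. P a b x y) = 1)"

definition no_signalling :: "nat \<Rightarrow> (nat \<Rightarrow> nat \<Rightarrow> nat \<Rightarrow> nat \<Rightarrow> real) \<Rightarrow> bool" where
  "no_signalling p P \<longleftrightarrow>
     (\<forall>a<p. \<forall>x<p. \<forall>y<p. \<forall>y'<p. (\<Sum>b<p. P a b x y) = (\<Sum>b<p. P a b x y')) \<and>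
     (\<forall>b<p. \<forall>x<p. \<forall>x'<p. \<forall>y<p. (\<Sum>a<p. P a b x y) = (\<Sum>a<p. P a b x' y))"

text \<open>A protocol with M copies of the box, shared randomness r < R with weights w,
  Alice's box inputs fA xs r (previous outputs), message fQ xs r (all outputs),
  Bob's box inputs fB y q r (previous outputs), Bob's guess fOut y q r (all outputs).
  All values are reduced mod p, so every function gives a valid protocol.
  prot_out_prob gives Pr(b = v | Alice's input xs, Bob's input y).\<close>

definition prot_out_prob ::
  "nat \<Rightarrow> (nat \<Rightarrow> nat \<Rightarrow> nat \<Rightarrow> nat \<Rightarrow> real) \<Rightarrow> nat \<Rightarrow> nat \<Rightarrow> (nat \<Rightarrow> real)
   \<Rightarrow> (nat list \<Rightarrow> nat \<Rightarrow> nat list \<Rightarrow> nat) \<Rightarrow> (nat list \<Rightarrow> nat \<Rightarrow> nat list \<Rightarrow> nat)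
   \<Rightarrow> (nat \<Rightarrow> nat \<Rightarrow> nat \<Rightarrow> nat list \<Rightarrow> nat) \<Rightarrow> (nat \<Rightarrow> nat \<Rightarrow> nat \<Rightarrow> nat list \<Rightarrow> nat)
   \<Rightarrow> nat list \<Rightarrow> nat \<Rightarrow> nat \<Rightarrow> real" where
  "prot_out_prob p P M R w fA fQ fB fOut xs y v =
     (\<Sum>r<R. w r * (\<Sum>as\<in>tuples p M. \<Sum>bs\<in>tuples p M.
        (let q = fQ xs r as mod p in
         if fOut y q r bs mod p = v then
           (\<Prod>m<M. P (as ! m) (bs ! m) (fA xs r (take m as) mod p) (fB y q r (take m bs) mod p))
         else 0)))"

definition ic_joint ::
  "nat \<Rightarrow> (nat \<Rightarrow> nat \<Rightarrow> nat \<Rightarrow> nat \<Rightarrow> real) \<Rightarrow> nat \<Rightarrow> nat \<Rightarrow> nat \<Rightarrow> (nat \<Rightarrow> real)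
   \<Rightarrow> (nat list \<Rightarrow> nat \<Rightarrow> nat list \<Rightarrow> nat) \<Rightarrow> (nat list \<Rightarrow> nat \<Rightarrow> nat list \<Rightarrow> nat)
   \<Rightarrow> (nat \<Rightarrow> nat \<Rightarrow> nat \<Rightarrow> nat list \<Rightarrow> nat) \<Rightarrow> (nat \<Rightarrow> nat \<Rightarrow> nat \<Rightarrow> nat list \<Rightarrow> nat)
   \<Rightarrow> nat \<Rightarrow> nat \<Rightarrow> nat \<Rightarrow> real" where
  "ic_joint p P N M R w fA fQ fB fOut i u v =
     (1 / real p ^ N) * (\<Sum>xs\<in>tuples p N.
        if xs ! i = u then prot_out_prob p P M R w fA fQ fB fOut xs i v else 0)"

definition mutual_info :: "nat \<Rightarrow> (nat \<Rightarrow> nat \<Rightarrow> real) \<Rightarrow> real" where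
  "mutual_info p Q =
     (\<Sum>u<p. \<Sum>v<p. if Q u v = 0 then 0
        else Q u v * log 2 (Q u v / ((\<Sum>v'<p. Q u v') * (\<Sum>u'<p. Q u' v))))"

definition info_causality :: "nat \<Rightarrow> (nat \<Rightarrow> nat \<Rightarrow> nat \<Rightarrow> nat \<Rightarrow> real) \<Rightarrow> bool" where
  "info_causality p P \<longleftrightarrow>
     (\<forall>N M R w fA fQ fB fOut. 1 \<le> N \<longrightarrow> (\<forall>r<R. 0 \<le> w r) \<longrightarrow> (\<Sum>r<R. w r) = 1 \<longrightarrow>
        (\<Sum>i<N. mutual_info p (ic_joint p P N M R w fA fQ fB fOut i)) \<le> log 2 (real p))"

definition bin_entropy :: "real \<Rightarrow> real" where
  "bin_entropy x = - x * log 2 x - (1 - x) * log 2 (1 - x)"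

definition T_p :: "nat \<Rightarrow> real \<Rightarrow> real" where
  "T_p p x = bin_entropy x + (1 - x) * log 2 (real p - 1)"

definition T_p_inv :: "nat \<Rightarrow> real \<Rightarrow> real" where
  "T_p_inv p t = (THE x. x \<in> {1 / real p .. 1} \<and> T_p p x = t)"

definition omega :: "nat \<Rightarrow> complex" where
  "omega p = cis (2 * pi / real p)"

definition mu :: "nat \<Rightarrow> (nat \<Rightarrow> nat \<Rightarrow> nat \<Rightarrow> nat \<Rightarrow> real) \<Rightarrow> nat \<Rightarrow> real" where
  "mu p P j = (1 / real p ^ 2) *
     (\<Sum>x<p. \<Sum>y<p. \<Sum>k<p. P k (nat ((int k - int x * int y + int j) mod int p)) x y)"

end

theory Submission
  imports Defs "HOL-Real_Asymp.Real_Asymp"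
begin

lemma finite_tuples[simp]: "finite (tuples p M)"
  unfolding tuples_def by (rule finite_lists_length_eq) simp

lemma tuples_Suc: "tuples p (Suc M) = (\<lambda>(a,as). a#as) ` ({..<p} \<times> tuples p M)"
  unfolding tuples_def by (auto simp: length_Suc_conv)

lemma sum_tuples_Suc:
  "(\<Sum>xs\<in>tuples p (Suc M). f xs) = (\<Sum>a<p. \<Sum>xs\<in>tuples p M. f (a#xs))"
proof -
  have "(\<Sum>xs\<in>tuples p (Suc M). f xs) = (\<Sum>x\<in>{..<p} \<times> tuples p M. f ((\<lambda>(a,as). a#as) x))"
    unfolding tuples_Suc by (subst sum.reindex) (auto simp: inj_on_def)
  also have "\<dots> = (\<Sum>a<p. \<Sum>xs\<in>tuples p M. f (a#xs))"
    unfolding sum.cartesian_product by (simp add: case_prod_unfold)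
  finally show ?thesis .
qed

lemma tuples_0[simp]: "tuples p 0 = {[]}"
  unfolding tuples_def by auto

lemma sum_mult_split: fixes f :: "nat \<Rightarrow> 'a::comm_monoid_add" shows "(\<Sum>r<q*n. f r) = (\<Sum>e<q. \<Sum>r<n. f (e + q*r))"
proof -
  have "(\<Sum>r<q*n. f r) = (\<Sum>m<n. sum f {m * q ..< m*q + q})"
    using sum.nat_group[of f q n] by (simp add: mult.commute)
  also have "\<dots> = (\<Sum>m<n. \<Sum>e<q. f (e + q*m))"
  proof (rule sum.cong[OF refl])
    fix m
    show "sum f {m * q ..< m*q + q} = (\<Sum>e<q. f (e + q*m))"
      using sum.shift_bounds_nat_ivl[of f 0 "m*q" q]
      by (simp add: lessThan_atLeast0 add.commute mult.commute)
  qed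
  also have "\<dots> = (\<Sum>e<q. \<Sum>r<n. f (e + q*r))" by (rule sum.swap)
  finally show ?thesis .
qed

lemma int_mod_cancel: "((a::int) + c) mod m = (b + c) mod m \<Longrightarrow> a mod m = b mod m"
  by (metis add_diff_cancel_right' mod_diff_left_eq)

lemma bij_mod_shift: "(p::nat) > 0 \<Longrightarrow> bij_betw (\<lambda>z. (z+k) mod p) {..<p} {..<p}"
proof -
  assume p: "p > 0"
  have "inj_on (\<lambda>z. (z+k) mod p) {..<p}"
  proof (rule inj_onI)
    fix x y assume "x \<in> {..<p}" "y \<in> {..<p}" "(x+k) mod p = (y+k) mod p"
    then have "int ((x+k) mod p) = int ((y+k) mod p)" by simp
    then have "(int x + int k) mod int p = (int y + int k) mod int p" by (simp add: zmod_int)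
    then have "int x mod int p = int y mod int p" by (rule int_mod_cancel)
    then show "x = y" using \<open>x \<in> {..<p}\<close> \<open>y \<in> {..<p}\<close> by simp

  qed
  moreover have "(\<lambda>z. (z+k) mod p) ` {..<p} \<subseteq> {..<p}" using p by auto
  ultimately show ?thesis
    by (simp add: bij_betw_def card_image card_subset_eq)
qed

lemma sum_mod_shift: "(p::nat) > 0 \<Longrightarrow> (\<Sum>z<p. f ((z+k) mod p)) = (\<Sum>z<p. f z)"
  using sum.reindex_bij_betw[OF bij_mod_shift] by blast

fun cv :: "nat \<Rightarrow> nat \<Rightarrow> (nat \<Rightarrow> nat \<Rightarrow> real) \<Rightarrow> nat \<Rightarrow> real" where
  "cv p 0 D z = (if z = 0 then 1 else 0)"
| "cv p (Suc M) D z = (\<Sum>d<p. D 0 d * cv p M (\<lambda>m. D (Suc m)) ((z + p - d) mod p))"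

lemma dig0: "(e::nat) < q \<Longrightarrow> (e + q*r) div q^0 mod q = e" by simp

lemma digSuc: "(e::nat) < q \<Longrightarrow> (e + q*r) div q^(Suc m) mod q = r div q^m mod q"
proof -
  assume e: "e < q"
  have "(e + q*r) div q^(Suc m) = ((e + q*r) div q) div q^m"
    by (simp add: div_mult2_eq)
  also have "(e + q*r) div q = r" using e by simp
  finally show ?thesis by simp
qed

lemma mod_eq_shift:
  assumes "(z::nat) < p"
  shows "((A::nat) + S) mod p = z \<longleftrightarrow> S mod p = (z + p - A mod p) mod p"
proof -
  have p: "p > 0" using assms by simp
  define a where "a = A mod p"
  define s where "s = S mod p"
  have a: "a < p" and s: "s < p" using p by (auto simp: a_def s_def)
  have "(A + S) mod p = (a + s) mod p" by (simp add: a_def s_def mod_add_eq)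
  also have "\<dots> = (if a + s < p then a + s else a + s - p)"
    using a s by (simp add: mod_if[of "a+s"] mod_if[of "a+s-p"])
  finally have 1: "(A + S) mod p = (if a + s < p then a + s else a + s - p)" .
  have 2: "(z + p - a) mod p = (if z + p - a < p then z + p - a else z - a)"
    using a assms by (simp add: mod_if[of "z+p-a"] mod_if[of "z - a"])
  show ?thesis unfolding 1 2 s_def[symmetric] a_def[symmetric] using a s assms by auto
qed

lemma reorder5:
  "(\<Sum>r\<in>R. \<Sum>a\<in>A. \<Sum>x\<in>X. \<Sum>b\<in>B. \<Sum>y\<in>Y. f r a x b y) =
   (\<Sum>a\<in>A. \<Sum>b\<in>B. \<Sum>r\<in>R. \<Sum>x\<in>X. \<Sum>y\<in>Y. f r a x b y)"
proof -
  have "(\<Sum>r\<in>R. \<Sum>a\<in>A. \<Sum>x\<in>X. \<Sum>b\<in>B. \<Sum>y\<in>Y. f r a x b y) =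
        (\<Sum>r\<in>R. \<Sum>a\<in>A. \<Sum>b\<in>B. \<Sum>x\<in>X. \<Sum>y\<in>Y. f r a x b y)"
    by (rule sum.cong[OF refl], rule sum.cong[OF refl], rule sum.swap)
  also have "\<dots> = (\<Sum>a\<in>A. \<Sum>r\<in>R. \<Sum>b\<in>B. \<Sum>x\<in>X. \<Sum>y\<in>Y. f r a x b y)"
    by (rule sum.swap)
  also have "\<dots> = (\<Sum>a\<in>A. \<Sum>b\<in>B. \<Sum>r\<in>R. \<Sum>x\<in>X. \<Sum>y\<in>Y. f r a x b y)"
    by (rule sum.cong[OF refl], rule sum.swap)
  finally show ?thesis .
qed

lemma reorder4:
  "(\<Sum>d\<in>D. \<Sum>e\<in>E. \<Sum>a\<in>A. \<Sum>b\<in>B. f d e a b) =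
   (\<Sum>e\<in>E. \<Sum>a\<in>A. \<Sum>b\<in>B. \<Sum>d\<in>D. f d e a b)"
proof -
  have "(\<Sum>d\<in>D. \<Sum>e\<in>E. \<Sum>a\<in>A. \<Sum>b\<in>B. f d e a b) = (\<Sum>e\<in>E. \<Sum>d\<in>D. \<Sum>a\<in>A. \<Sum>b\<in>B. f d e a b)"
    by (rule sum.swap)
  also have "\<dots> = (\<Sum>e\<in>E. \<Sum>a\<in>A. \<Sum>d\<in>D. \<Sum>b\<in>B. f d e a b)"
    by (rule sum.cong[OF refl], rule sum.swap)
  also have "\<dots> = (\<Sum>e\<in>E. \<Sum>a\<in>A. \<Sum>b\<in>B. \<Sum>d\<in>D. f d e a b)"
    by (rule sum.cong[OF refl], rule sum.cong[OF refl], rule sum.swap)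
  finally show ?thesis .
qed

lemma delta_aux: "(k::nat) < p \<Longrightarrow> (\<Sum>d<p. (if k = d then g else 0) * C d) = g * (C k :: real)"
proof -
  assume k: "k < p"
  have "(\<Sum>d<p. (if k = d then g else 0) * C d) = (\<Sum>d<p. if k = d then g * C d else 0)"
    by (rule sum.cong) auto
  also have "\<dots> = g * C k" using k by simp
  finally show ?thesis .
qed

lemma conv_sum:
  fixes q p z :: nat and h :: "nat \<Rightarrow> nat \<Rightarrow> nat \<Rightarrow> nat \<Rightarrow> nat" and g :: "nat \<Rightarrow> nat \<Rightarrow> nat \<Rightarrow> nat \<Rightarrow> real"
  assumes "p > 0" "q > 0" "z < p"
  shows "(\<Sum>r<q^M. \<Sum>as\<in>tuples p M. \<Sum>bs\<in>tuples p M.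
            if (\<Sum>m<M. h m (r div q^m mod q) (as!m) (bs!m)) mod p = z
            then (\<Prod>m<M. g m (r div q^m mod q) (as!m) (bs!m)) else 0)
       = cv p M (\<lambda>m d. \<Sum>e<q. \<Sum>a<p. \<Sum>b<p. if h m e a b mod p = d then g m e a b else 0) z"
  using assms(3)
proof (induction M arbitrary: g h z)
  case 0
  have "{..<(1::nat)} = {0}" by auto
  then show ?case using 0 by simp
next
  case (Suc M)
  define D where "D = (\<lambda>m d. \<Sum>e<q. \<Sum>a<p. \<Sum>b<p. if h m e a b mod p = d then g m e a b else (0::real))"
  define z' where "z' = (\<lambda>e a b. (z + p - h 0 e a b mod p) mod p)"
  define G where "G = (\<lambda>e a b r as bs. if (\<Sum>m<M. h (Suc m) (r div q^m mod q) (as!m) (bs!m)) mod p = z' e a b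
            then (\<Prod>m<M. g (Suc m) (r div q^m mod q) (as!m) (bs!m)) else (0::real))"
  have z'p: "z' e a b < p" for e a b using assms(1) by (simp add: z'_def)
  have IH: "(\<Sum>r<q^M. \<Sum>as\<in>tuples p M. \<Sum>bs\<in>tuples p M. G e a b r as bs) = cv p M (\<lambda>m. D (Suc m)) (z' e a b)"
    for e a b
    unfolding G_def D_def using Suc.IH[of "z' e a b" "\<lambda>m. h (Suc m)" "\<lambda>m. g (Suc m)", OF z'p] by simp
  have pt: "(if (\<Sum>m<Suc M. h m ((e + q*r) div q^m mod q) ((a#as)!m) ((b#bs)!m)) mod p = z
            then (\<Prod>m<Suc M. g m ((e + q*r) div q^m mod q) ((a#as)!m) ((b#bs)!m)) else 0)
         = g 0 e a b * G e a b r as bs" if e: "e < q" for e a b r as bs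
  proof -
    have s: "(\<Sum>m<Suc M. h m ((e + q*r) div q^m mod q) ((a#as)!m) ((b#bs)!m))
       = h 0 e a b + (\<Sum>m<M. h (Suc m) (r div q^m mod q) (as!m) (bs!m))"
      using e by (simp only: sum.lessThan_Suc_shift) (simp add: digSuc del: power_Suc sum.lessThan_Suc)
    have pr: "(\<Prod>m<Suc M. g m ((e + q*r) div q^m mod q) ((a#as)!m) ((b#bs)!m))
       = g 0 e a b * (\<Prod>m<M. g (Suc m) (r div q^m mod q) (as!m) (bs!m))"
      using e by (simp only: prod.lessThan_Suc_shift) (simp add: digSuc del: power_Suc prod.lessThan_Suc)
    show ?thesis unfolding s pr G_def z'_def using mod_eq_shift[OF Suc.prems] by simp
  qed
  have "(\<Sum>r<q^Suc M. \<Sum>as\<in>tuples p (Suc M). \<Sum>bs\<in>tuples p (Suc M).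
            if (\<Sum>m<Suc M. h m (r div q^m mod q) (as!m) (bs!m)) mod p = z
            then (\<Prod>m<Suc M. g m (r div q^m mod q) (as!m) (bs!m)) else 0)
      = (\<Sum>e<q. \<Sum>r<q^M. \<Sum>a<p. \<Sum>as\<in>tuples p M. \<Sum>b<p. \<Sum>bs\<in>tuples p M.
            g 0 e a b * G e a b r as bs)"
    by (simp only: power_Suc sum_mult_split sum_tuples_Suc) (intro sum.cong refl, rule pt, simp)
  also have "\<dots> = (\<Sum>e<q. \<Sum>a<p. \<Sum>b<p. \<Sum>r<q^M. \<Sum>as\<in>tuples p M. \<Sum>bs\<in>tuples p M.
            g 0 e a b * G e a b r as bs)"
    by (rule sum.cong[OF refl], rule reorder5)
  also have "\<dots> = (\<Sum>e<q. \<Sum>a<p. \<Sum>b<p. g 0 e a b * cv p M (\<lambda>m. D (Suc m)) (z' e a b))"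
    by (simp add: sum_distrib_left[symmetric] IH)
  also have "\<dots> = (\<Sum>e<q. \<Sum>a<p. \<Sum>b<p. \<Sum>d<p. (if h 0 e a b mod p = d then g 0 e a b else 0)
                      * cv p M (\<lambda>m. D (Suc m)) ((z + p - d) mod p))"
    using assms(1) by (intro sum.cong refl) (simp add: z'_def delta_aux)
  also have "\<dots> = (\<Sum>d<p. \<Sum>e<q. \<Sum>a<p. \<Sum>b<p. (if h 0 e a b mod p = d then g 0 e a b else 0)
                      * cv p M (\<lambda>m. D (Suc m)) ((z + p - d) mod p))"
    by (rule reorder4[symmetric])
  also have "\<dots> = cv p (Suc M) D z"
    by (simp add: D_def sum_distrib_right)
  finally show ?case unfolding D_def .
qed

lemma cv_nonneg: "(\<And>m d. D m d \<ge> 0) \<Longrightarrow> cv p M D z \<ge> 0"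
proof (induction M arbitrary: D z)
  case 0 then show ?case by simp
next
  case (Suc M)
  have "\<And>m d. D (Suc m) d \<ge> 0" using Suc.prems by simp
  then show ?case using Suc by (simp add: sum_nonneg)
qed

lemma shift_back: "(z::nat) < p \<Longrightarrow> d < p \<Longrightarrow> ((z+d) mod p + p - d) mod p = z"
  by (cases "z+d<p") (auto simp: mod_if)

lemma sum_mod_shift': "(p::nat) > 0 \<Longrightarrow> d \<le> p \<Longrightarrow> (\<Sum>z<p. f ((z+p-d) mod p)) = (\<Sum>z<p. f z)"
  using sum_mod_shift[of p f "p-d"] by simp

lemma cv_sum: "(p::nat) > 0 \<Longrightarrow> (\<Sum>z<p. cv p M D z) = (\<Prod>m<M. \<Sum>d<p. D m d)"
proof (induction M arbitrary: D)
  case 0 then show ?case by simp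
next
  case (Suc M)
  have "(\<Sum>z<p. cv p (Suc M) D z) = (\<Sum>d<p. D 0 d * (\<Sum>z<p. cv p M (\<lambda>m. D (Suc m)) ((z + (p - d)) mod p)))"
    by (simp add: sum_distrib_left) (rule sum.swap)
  also have "\<dots> = (\<Sum>d<p. D 0 d * (\<Sum>z<p. cv p M (\<lambda>m. D (Suc m)) z))"
    using Suc.prems by (intro sum.cong refl) (simp add: sum_mod_shift')
  also have "\<dots> = (\<Sum>d<p. D 0 d) * (\<Prod>m<M. \<Sum>d<p. D (Suc m) d)"
    using Suc by (simp add: sum_distrib_right)
  finally show ?case by (simp add: prod.lessThan_Suc_shift del: prod.lessThan_Suc)
qed

lemma omega_pow_p: "p > 0 \<Longrightarrow> omega p ^ p = 1"
proof -
  assume "p > 0"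
  then have "real p * (2 * pi / real p) = 2 * pi" by simp
  then show ?thesis unfolding omega_def Complex.DeMoivre by simp
qed

lemma omega_pow_mod: "p > 0 \<Longrightarrow> omega p ^ n = omega p ^ (n mod p)"
proof -
  assume p: "p > 0"
  have "omega p ^ n = omega p ^ (p * (n div p) + n mod p)" by simp
  also have "\<dots> = omega p ^ (n mod p)" by (simp only: power_add power_mult omega_pow_p[OF p]) simp
  finally show ?thesis .
qed

lemma omega_cong: "p > 0 \<Longrightarrow> a mod p = b mod p \<Longrightarrow> omega p ^ a = omega p ^ b"
  by (metis omega_pow_mod)

lemma cv_fourier:
  "(p::nat) > 0 \<Longrightarrow> (\<Sum>z<p. complex_of_real (cv p M D z) * omega p ^ (z*k))
     = (\<Prod>m<M. \<Sum>d<p. complex_of_real (D m d) * omega p ^ (d*k))"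
proof (induction M arbitrary: D)
  case 0
  have "(\<Sum>z<p. complex_of_real (if z = 0 then 1 else 0) * omega p ^ (z * k)) = (\<Sum>z<p. if z = 0 then 1 else 0)"
    by (rule sum.cong) auto
  then show ?case using 0 by simp
next
  case (Suc M)
  note p = Suc.prems
  let ?C = "cv p M (\<lambda>m. D (Suc m))"
  have inner: "(\<Sum>z<p. complex_of_real (?C ((z + p - d) mod p)) * omega p ^ (z*k))
      = (\<Sum>z<p. complex_of_real (?C z) * omega p ^ (z*k)) * omega p ^ (d*k)" if d: "d < p" for d
  proof -
    have "(\<Sum>z<p. complex_of_real (?C ((z + p - d) mod p)) * omega p ^ (z*k))
       = (\<Sum>z<p. complex_of_real (?C (((z + d) mod p + p - d) mod p)) * omega p ^ (((z + d) mod p)*k))"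
      using sum_mod_shift[OF p, of "\<lambda>z. complex_of_real (?C ((z + p - d) mod p)) * omega p ^ (z*k)" d]
      by simp
    also have "\<dots> = (\<Sum>z<p. complex_of_real (?C z) * omega p ^ (z*k) * omega p ^ (d*k))"
    proof (rule sum.cong[OF refl])
      fix z assume "z \<in> {..<p}"
      then have z: "z < p" by simp
      have "omega p ^ (((z + d) mod p)*k) = omega p ^ ((z+d)*k)"
        by (rule omega_cong[OF p]) (simp add: mod_mult_left_eq)
      then show "complex_of_real (?C (((z + d) mod p + p - d) mod p)) * omega p ^ (((z + d) mod p)*k)
          = complex_of_real (?C z) * omega p ^ (z*k) * omega p ^ (d*k)"
        using shift_back[OF z d] by (simp add: algebra_simps power_add)
    qed
    finally show ?thesis by (simp add: sum_distrib_right)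
  qed
  have "(\<Sum>z<p. complex_of_real (cv p (Suc M) D z) * omega p ^ (z*k))
     = (\<Sum>d<p. complex_of_real (D 0 d) * (\<Sum>z<p. complex_of_real (?C ((z + p - d) mod p)) * omega p ^ (z*k)))"
    by (simp add: sum_distrib_left sum_distrib_right algebra_simps) (subst sum.swap, simp)
  also have "\<dots> = (\<Sum>d<p. complex_of_real (D 0 d) * ((\<Sum>z<p. complex_of_real (?C z) * omega p ^ (z*k)) * omega p ^ (d*k)))"
    by (intro sum.cong refl) (simp add: inner)
  also have "\<dots> = (\<Sum>d<p. complex_of_real (D 0 d) * omega p ^ (d*k)) * (\<Sum>z<p. complex_of_real (?C z) * omega p ^ (z*k))"
    by (simp add: sum_distrib_right algebra_simps)
  finally show ?case using Suc.IH[OF p, of "\<lambda>m. D (Suc m)"]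
    by (simp add: prod.lessThan_Suc_shift del: prod.lessThan_Suc)
qed

lemma omega_sum:
  assumes "(p::nat) > 1"
  shows "(\<Sum>k<p. omega p ^ (n*k)) = (if p dvd n then of_nat p else 0)"
proof (cases "p dvd n")
  case True
  then obtain t where "n = p * t" by auto
  then have "omega p ^ (n*k) = 1" for k using assms
    by (simp add: power_mult omega_pow_p)
  then show ?thesis using True by simp
next
  case False
  define w where "w = omega p ^ n"
  have "w \<noteq> 1"
  proof
    assume "w = 1"
    have "w = cis (real n * (2 * pi / real p))" unfolding w_def omega_def by (simp only: Complex.DeMoivre)
    with \<open>w = 1\<close> obtain t :: int where "real n * (2 * pi / real p) = of_int t * 2 * pi"
      by (auto simp: complex_eq_iff cos_one_2pi_int)
    then have "real n = real p * of_int t" using assms by (simp add: field_simps)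
    then have "int n = int p * t" by (metis of_int_eq_iff of_int_mult of_int_of_nat_eq)
    then have "int p dvd int n" by simp
    then show False using False by simp
  qed
  have "(\<Sum>k<p. omega p ^ (n*k)) = (\<Sum>k<p. w ^ k)" by (simp add: w_def power_mult)
  also have "\<dots> = (w ^ p - 1) / (w - 1)" using \<open>w \<noteq> 1\<close> by (simp add: geometric_sum)
  also have "w ^ p = 1" using assms by (simp add: w_def power_mult[symmetric] mult.commute[of n] power_mult omega_pow_p)
  finally show ?thesis using False by simp
qed

lemma inversion:
  assumes "(p::nat) > 1" "c < p"
  shows "(1 / of_nat p) * (\<Sum>k<p. omega p ^ (c * k) * (\<Sum>z<p. complex_of_real (f z) * omega p ^ (z * k)))
    = complex_of_real (f ((p - c) mod p))"
proof -
  have "(\<Sum>k<p. omega p ^ (c * k) * (\<Sum>z<p. complex_of_real (f z) * omega p ^ (z * k)))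
      = (\<Sum>z<p. complex_of_real (f z) * (\<Sum>k<p. omega p ^ ((c + z) * k)))"
    by (simp add: sum_distrib_left sum_distrib_right algebra_simps power_add) (subst sum.swap, simp add: algebra_simps)
  also have "\<dots> = (\<Sum>z<p. if z = (p - c) mod p then complex_of_real (f z) * of_nat p else 0)"
  proof (rule sum.cong[OF refl])
    fix z assume "z \<in> {..<p}"
    then have z: "z < p" by simp
    have "p dvd (c + z) \<longleftrightarrow> z = (p - c) mod p"
    proof
      assume "p dvd (c+z)"
      then obtain t where t: "c + z = p * t" by auto
      have "p * t < p * 2" using t z assms by linarith
      then have "t < 2" using mult_less_cancel1[of p t 2] by simp
      then have "t \<le> 1" by simp
      show "z = (p - c) mod p" using t z assms \<open>t \<le> 1\<close> by (cases t) (auto simp: le_Suc_eq)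
    next
      assume "z = (p - c) mod p"
      then show "p dvd (c+z)" using assms by (cases "c = 0") auto
    qed
    then show "complex_of_real (f z) * (\<Sum>k<p. omega p ^ ((c + z) * k))
       = (if z = (p - c) mod p then complex_of_real (f z) * of_nat p else 0)"
      using omega_sum[OF assms(1)] by simp
  qed
  also have "\<dots> = complex_of_real (f ((p - c) mod p)) * of_nat p"
    using assms by simp
  finally show ?thesis using assms by simp
qed

lemma inj_shift:
  fixes p :: nat assumes p: "p > 0" and "b < p" "b0 < p" and "(b + k) mod p = (b0 + k) mod p" shows "b = b0"
proof -
  have "inj_on (\<lambda>z. (z + k) mod p) {..<p}"
    using bij_mod_shift[OF p, of k] unfolding bij_betw_def by blast
  then show ?thesis using assms(2-4) unfolding inj_on_def by blast
qed

lemma uniq_b: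
  fixes a b d x y p :: nat
  assumes "a < p" "d < p" "b < p"
  shows "(b + (p - a) + x*y) mod p = d \<longleftrightarrow> b = nat ((int a - int x * int y + int d) mod int p)"
proof -
  define b0 where "b0 = nat ((int a - int x * int y + int d) mod int p)"
  have p: "p > 0" using assms by simp
  have ib0: "int b0 = (int a - int x * int y + int d) mod int p" unfolding b0_def using p by simp
  have b0p: "b0 < p" unfolding b0_def using p by (simp add: nat_less_iff)
  have ipa: "int (p - a) = int p - int a" using assms(1) by simp
  have "int ((b0 + (p - a) + x*y) mod p) = int (b0 + (p - a) + x*y) mod int p"
    by (simp only: zmod_int)
  also have "int (b0 + (p - a) + x*y) = int b0 + (int p - int a) + int x * int y"
    using ipa by (simp only: of_nat_add of_nat_mult)
  also have "(int b0 + (int p - int a) + int x * int y) mod int p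
     = ((int a - int x * int y + int d) + (int p - int a) + int x * int y) mod int p"
    unfolding ib0 by (simp only: add.assoc mod_add_left_eq)
  also have "(int a - int x * int y + int d) + (int p - int a) + int x * int y = int d + int p"
    by simp
  also have "(int d + int p) mod int p = int d" using assms(2) by simp
  finally have e0: "(b0 + (p - a) + x*y) mod p = d" by (simp only: of_nat_eq_iff)
  have "b = b0" if h: "(b + (p - a) + x*y) mod p = d"
    using inj_shift[OF p assms(3) b0p, of "(p - a) + x*y"] h e0 by (simp only: add.assoc)
  then show ?thesis using e0 unfolding b0_def[symmetric] by blast
qed

lemma sum_pp:
  fixes f :: "nat \<Rightarrow> nat \<Rightarrow> 'a::comm_monoid_add"
  shows "(\<Sum>e<p*p. f (e div p) (e mod p)) = (\<Sum>s<p. \<Sum>t<p. f s t)"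
proof -
  have "(\<Sum>e<p*p. f (e div p) (e mod p)) = (\<Sum>e<p. \<Sum>r<p. f ((e + p*r) div p) ((e + p*r) mod p))"
    by (rule sum_mult_split)
  also have "\<dots> = (\<Sum>e<p. \<Sum>r<p. f r e)"
    by (intro sum.cong refl) simp
  also have "\<dots> = (\<Sum>s<p. \<Sum>t<p. f s t)" by (rule sum.swap)
  finally show ?thesis .
qed

definition Dm :: "nat \<Rightarrow> (nat \<Rightarrow> nat \<Rightarrow> nat \<Rightarrow> nat \<Rightarrow> real) \<Rightarrow> nat \<Rightarrow> nat \<Rightarrow> nat \<Rightarrow> real" where
  "Dm p P xa yb d = (\<Sum>e<p*p. \<Sum>a<p. \<Sum>b<p.
      if (b + (p - a) + ((xa + e div p) mod p) * ((yb + e mod p) mod p)) mod p = d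
      then 1 / (real p * real p) * P a b ((xa + e div p) mod p) ((yb + e mod p) mod p) else 0)"

lemma D_mu:
  assumes p: "p > 0" and d: "d < p"
  shows "Dm p P xa yb d = mu p P d"
proof -
  define Phi where "Phi = (\<lambda>x y. \<Sum>a<p. \<Sum>b<p. if (b + (p - a) + x * y) mod p = d
      then 1 / (real p * real p) * P a b x y else 0)"
  have "Dm p P xa yb d = (\<Sum>e<p*p. Phi ((xa + e div p) mod p) ((yb + e mod p) mod p))"
    unfolding Dm_def by (simp only: Phi_def)
  also have "\<dots> = (\<Sum>s<p. \<Sum>t<p. Phi ((s + xa) mod p) ((t + yb) mod p))"
    using sum_pp[of "\<lambda>s t. Phi ((xa + s) mod p) ((yb + t) mod p)" p] by (simp only: add.commute)
  also have "\<dots> = (\<Sum>s<p. \<Sum>y<p. Phi ((s + xa) mod p) y)"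
    by (rule sum.cong[OF refl], rule sum_mod_shift[OF p])
  also have "\<dots> = (\<Sum>x<p. \<Sum>y<p. Phi x y)"
    by (rule sum_mod_shift[OF p, of "\<lambda>x. \<Sum>y<p. Phi x y"])
  also have "\<dots> = (\<Sum>x<p. \<Sum>y<p. \<Sum>k<p. 1 / (real p * real p) * P k (nat ((int k - int x * int y + int d) mod int p)) x y)"
  proof (intro sum.cong refl)
    fix x y k
    show "Phi x y = (\<Sum>k<p. 1 / (real p * real p) * P k (nat ((int k - int x * int y + int d) mod int p)) x y)"
      unfolding Phi_def
    proof (rule sum.cong[OF refl])
      fix a assume "a \<in> {..<p}"
      then have a: "a < p" by simp
      have "(\<Sum>b<p. if (b + (p - a) + x * y) mod p = d then 1 / (real p * real p) * P a b x y else 0)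
          = (\<Sum>b<p. if b = nat ((int a - int x * int y + int d) mod int p) then 1 / (real p * real p) * P a b x y else 0)"
        by (rule sum.cong[OF refl]) (use uniq_b[OF a d] in auto)
      also have "\<dots> = 1 / (real p * real p) * P a (nat ((int a - int x * int y + int d) mod int p)) x y"
        using p by (simp add: nat_less_iff)
      finally show "(\<Sum>b<p. if (b + (p - a) + x * y) mod p = d then 1 / (real p * real p) * P a b x y else 0)
          = 1 / (real p * real p) * P a (nat ((int a - int x * int y + int d) mod int p)) x y" .
    qed
  qed
  also have "\<dots> = mu p P d"
    unfolding mu_def by (simp add: sum_distrib_left power2_eq_square)
  finally show ?thesis .
qed

lemma D_sum:
  assumes p: "p > 0" and box: "is_box p P"
  shows "(\<Sum>d<p. Dm p P xa yb d) = 1"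
proof -
  have "(\<Sum>d<p. Dm p P xa yb d) = (\<Sum>e<p*p. \<Sum>a<p. \<Sum>b<p. \<Sum>d<p.
      if (b + (p - a) + ((xa + e div p) mod p) * ((yb + e mod p) mod p)) mod p = d
      then 1 / (real p * real p) * P a b ((xa + e div p) mod p) ((yb + e mod p) mod p) else 0)"
    unfolding Dm_def by (rule reorder4)
  also have "\<dots> = (\<Sum>e<p*p. 1 / (real p * real p) * (\<Sum>a<p. \<Sum>b<p. P a b ((xa + e div p) mod p) ((yb + e mod p) mod p)))"
    using p by (simp add: sum_distrib_left)
  also have "\<dots> = (\<Sum>e<p*p. 1 / (real p * real p))"
    using box p unfolding is_box_def by simp
  also have "\<dots> = 1" using p by simp
  finally show ?thesis .
qed

lemma D_nonneg:
  assumes "p > 0" "is_box p P"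
  shows "Dm p P xa yb d \<ge> 0"
  unfolding Dm_def using assms unfolding is_box_def by (intro sum_nonneg) auto

lemma logsum_ln:
  fixes f :: "'a \<Rightarrow> real"
  assumes "finite A" "card A = n" "n > 0" "\<And>a. a \<in> A \<Longrightarrow> f a \<ge> 0"
  shows "- (\<Sum>a\<in>A. f a * ln (f a)) \<le> (\<Sum>a\<in>A. f a) * ln n - (\<Sum>a\<in>A. f a) * ln (\<Sum>a\<in>A. f a)"
proof -
  define S where "S = (\<Sum>a\<in>A. f a)"
  have S0: "S \<ge> 0" unfolding S_def using assms(4) by (simp add: sum_nonneg)
  show ?thesis
  proof (cases "S = 0")
    case True
    then have "\<forall>a\<in>A. f a = 0" using sum_nonneg_eq_0_iff[OF assms(1)] assms(4) unfolding S_def by blast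
    then show ?thesis using True unfolding S_def by simp
  next
    case False
    then have Sp: "S > 0" using S0 by simp
    have key: "f a * ln S - f a * ln n - f a * ln (f a) \<le> S / n - f a" if a: "a \<in> A" for a
    proof (cases "f a = 0")
      case True then show ?thesis using Sp assms(3) by simp
    next
      case False
      then have fa: "f a > 0" using assms(4)[OF a] by simp
      have "ln (S / (n * f a)) \<le> S / (n * f a) - 1"
        using Sp fa assms(3) by (intro ln_le_minus_one) simp
      also have "ln (S / (n * f a)) = ln S - ln n - ln (f a)"
        using Sp fa assms(3) by (simp add: ln_div ln_mult)
      finally have "f a * (ln S - ln n - ln (f a)) \<le> f a * (S / (n * f a) - 1)"
        using fa by (intro mult_left_mono) auto
      then show ?thesis using fa by (simp add: algebra_simps)
    qed
    have "(\<Sum>a\<in>A. f a * ln S - f a * ln n - f a * ln (f a)) \<le> (\<Sum>a\<in>A. S / n - f a)"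
      by (rule sum_mono) (rule key)
    then have "S * ln S - S * ln n - (\<Sum>a\<in>A. f a * ln (f a)) \<le> S - S"
      using assms(2,3) unfolding S_def by (simp add: sum_subtractf sum_distrib_right[symmetric])
    then show ?thesis unfolding S_def by simp
  qed
qed

definition Hent :: "nat \<Rightarrow> (nat \<Rightarrow> real) \<Rightarrow> real" where
  "Hent p f = - (\<Sum>z<p. f z * log 2 (f z))"

lemma grouping:
  fixes f :: "nat \<Rightarrow> real"
  assumes p: "p \<ge> 2" and nn: "\<And>z. z < p \<Longrightarrow> f z \<ge> 0" and s1: "(\<Sum>z<p. f z) = 1" and z0: "z0 < p"
  shows "Hent p f \<le> T_p p (f z0)"
proof -
  define A where "A = {..<p} - {z0}"
  have fA: "finite A" and cA: "card A = p - 1" using z0 by (auto simp: A_def)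
  have S: "(\<Sum>z\<in>A. f z) = 1 - f z0"
    using s1 z0 sum.remove[of "{..<p}" z0 f] by (simp add: A_def)
  have "- (\<Sum>a\<in>A. f a * ln (f a)) \<le> (\<Sum>a\<in>A. f a) * ln (real (p - 1)) - (\<Sum>a\<in>A. f a) * ln (\<Sum>a\<in>A. f a)"
    by (rule logsum_ln[OF fA cA]) (use p nn in \<open>auto simp: A_def\<close>)
  then have L0: "- (\<Sum>a\<in>A. f a * ln (f a)) \<le> (1 - f z0) * ln (real (p - 1)) - (1 - f z0) * ln (1 - f z0)"
    unfolding S .
  then have L: "- (\<Sum>a\<in>A. f a * log 2 (f a)) \<le> (1 - f z0) * log 2 (real p - 1) - (1 - f z0) * log 2 (1 - f z0)"
    using divide_right_mono[OF L0, of "ln 2"] p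
    by (simp add: log_def sum_divide_distrib[symmetric] diff_divide_distrib[symmetric] of_nat_diff)
  have "Hent p f = - f z0 * log 2 (f z0) - (\<Sum>a\<in>A. f a * log 2 (f a))"
    unfolding Hent_def A_def using z0 sum.remove[of "{..<p}" z0 "\<lambda>z. f z * log 2 (f z)"] by simp
  also have "\<dots> \<le> T_p p (f z0)"
    using L unfolding T_p_def bin_entropy_def by simp
  finally show ?thesis .
qed

lemma card_tuples: "card (tuples p N) = p ^ N"
  unfolding tuples_def using card_lists_length_eq[of "{..<p}" N] by simp

lemma fiber_sum:
  "i < N \<Longrightarrow> u < p \<Longrightarrow> (\<Sum>xs\<in>tuples p N. if xs!i = u then (c::real) else 0) = c * real p ^ (N - 1)"
proof (induction N arbitrary: i)
  case 0 then show ?case by simp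
next
  case (Suc N)
  show ?case
  proof (cases i)
    case 0
    have "(\<Sum>xs\<in>tuples p (Suc N). if xs!i = u then c else 0) = (\<Sum>a<p. \<Sum>xs\<in>tuples p N. if a = u then c else 0)"
      unfolding sum_tuples_Suc 0 by simp
    also have "\<dots> = (\<Sum>a<p. if a = u then c * real (card (tuples p N)) else 0)"
      by (intro sum.cong refl) simp
    also have "\<dots> = c * real p ^ N" using Suc.prems by (simp add: card_tuples)
    finally show ?thesis by simp
  next
    case (Suc i')
    then have i': "i' < N" using Suc.prems by simp
    have "(\<Sum>xs\<in>tuples p (Suc N). if xs!i = u then c else 0) = (\<Sum>a<p. \<Sum>xs\<in>tuples p N. if xs!i' = u then c else 0)"
      unfolding sum_tuples_Suc Suc by simp
    also have "\<dots> = real p * (c * real p ^ (N - 1))" using Suc.IH[OF i' Suc.prems(2)] by simp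
    also have "\<dots> = c * real p ^ N" using i' by (cases N) auto
    finally show ?thesis by simp
  qed
qed

lemma cv_cong: "(\<And>m d. d < p \<Longrightarrow> D m d = D' m d) \<Longrightarrow> cv p M D z = cv p M D' z"
proof (induction M arbitrary: D D' z)
  case 0 then show ?case by simp
next
  case (Suc M)
  have "cv p M (\<lambda>m. D (Suc m)) w = cv p M (\<lambda>m. D' (Suc m)) w" for w
    by (rule Suc.IH) (use Suc.prems in auto)
  then show ?case using Suc.prems by simp
qed

lemma sum_mod_refl:
  fixes p :: nat assumes p: "p > 0" and v: "v < p"
  shows "(\<Sum>u<p. f ((v + p - u) mod p)) = (\<Sum>z<p. f z)"
proof -
  have key: "(((v + p - u) mod p) + u) mod p = v" if "u < p" for u
  proof -
    have "(((v + p - u) mod p) + u) mod p = ((v + p - u) + u) mod p" by (simp add: mod_add_left_eq)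
    also have "(v + p - u) + u = v + p" using that by simp
    finally show ?thesis using v by simp
  qed
  have "inj_on (\<lambda>u. (v + p - u) mod p) {..<p}"
  proof (rule inj_onI)
    fix u u' assume u: "u \<in> {..<p}" and u': "u' \<in> {..<p}" and e: "(v + p - u) mod p = (v + p - u') mod p"
    have "(u + (v + p - u) mod p) mod p = (u' + (v + p - u) mod p) mod p"
      using key[of u] key[of u'] u u' e by (simp add: add.commute)
    then show "u = u'" using inj_shift[OF p, of u u'] u u' by simp
  qed
  moreover have "(\<lambda>u. (v + p - u) mod p) ` {..<p} \<subseteq> {..<p}" using p by auto
  ultimately have "bij_betw (\<lambda>u. (v + p - u) mod p) {..<p} {..<p}"
    by (simp add: bij_betw_def card_image card_subset_eq)
  then show ?thesis using sum.reindex_bij_betw by blast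
qed

lemma mi_shift:
  fixes nu :: "nat \<Rightarrow> real" and p :: nat
  assumes p: "p > 0" and nn: "\<And>z. z < p \<Longrightarrow> nu z \<ge> 0" and s1: "(\<Sum>z<p. nu z) = 1"
    and Q: "\<And>u v. u < p \<Longrightarrow> v < p \<Longrightarrow> Q u v = nu ((v + p - u) mod p) / real p"
  shows "mutual_info p Q = log 2 (real p) - Hent p nu"
proof -
  define phi where "phi = (\<lambda>z. if nu z = 0 then 0 else nu z / real p * log 2 (real p * nu z))"
  have row: "(\<Sum>v'<p. Q u v') = 1 / real p" if "u < p" for u
  proof -
    have "(\<Sum>v'<p. Q u v') = (\<Sum>v'<p. nu ((v' + p - u) mod p) / real p)"
      using that Q by (intro sum.cong) auto
    also have "\<dots> = (\<Sum>z<p. nu z) / real p"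
      unfolding sum_divide_distrib[symmetric] using sum_mod_shift'[OF p, of u nu] that by simp
    finally show ?thesis using s1 by simp
  qed
  have col: "(\<Sum>u'<p. Q u' v) = 1 / real p" if "v < p" for v
  proof -
    have "(\<Sum>u'<p. Q u' v) = (\<Sum>u'<p. nu ((v + p - u') mod p) / real p)"
      using that Q by (intro sum.cong) auto
    also have "\<dots> = (\<Sum>z<p. nu z) / real p"
      unfolding sum_divide_distrib[symmetric] using sum_mod_refl[OF p that, of nu] by simp
    finally show ?thesis using s1 by simp
  qed
  have trm: "(if Q u v = 0 then 0 else Q u v * log 2 (Q u v / ((\<Sum>v'<p. Q u v') * (\<Sum>u'<p. Q u' v))))
      = phi ((v + p - u) mod p)" if "u < p" "v < p" for u v
    using that p unfolding row[OF that(1)] col[OF that(2)] Q[OF that] phi_def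
    by (auto simp: field_simps)
  have "mutual_info p Q = (\<Sum>u<p. \<Sum>v<p. phi ((v + p - u) mod p))"
    unfolding mutual_info_def using trm by (intro sum.cong refl) auto
  also have "\<dots> = (\<Sum>u<p. \<Sum>z<p. phi z)"
    by (rule sum.cong[OF refl]) (rule sum_mod_shift', use p in auto)
  also have "\<dots> = (\<Sum>z<p. real p * phi z)" by (simp add: sum_distrib_left)
  also have "\<dots> = (\<Sum>z<p. nu z * log 2 (real p) + nu z * log 2 (nu z))"
  proof (rule sum.cong[OF refl])
    fix z assume "z \<in> {..<p}"
    then have "nu z \<ge> 0" using nn by simp
    then show "real p * phi z = nu z * log 2 (real p) + nu z * log 2 (nu z)"
      unfolding phi_def using p by (auto simp: log_mult algebra_simps)
  qed
  also have "\<dots> = log 2 (real p) - Hent p nu"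
    unfolding Hent_def by (simp add: sum.distrib sum_distrib_right[symmetric] s1)
  finally show ?thesis .
qed

definition dgt :: "nat \<Rightarrow> nat \<Rightarrow> nat \<Rightarrow> nat" where
  "dgt p r m = r div (p*p)^m mod (p*p)"
definition xaF :: "nat \<Rightarrow> nat list \<Rightarrow> nat \<Rightarrow> nat" where
  "xaF p xs m = (xs!0 + (p - xs!(Suc m))) mod p"
definition ybF :: "nat \<Rightarrow> nat \<Rightarrow> nat" where
  "ybF i m = (if i = Suc m then 1 else 0)"

definition protA :: "nat \<Rightarrow> nat list \<Rightarrow> nat \<Rightarrow> nat list \<Rightarrow> nat" where
  "protA p xs r pre = xaF p xs (length pre) + dgt p r (length pre) div p"
definition protB :: "nat \<Rightarrow> nat \<Rightarrow> nat \<Rightarrow> nat \<Rightarrow> nat list \<Rightarrow> nat" where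
  "protB p y q r pre = ybF y (length pre) + dgt p r (length pre) mod p"
definition protQ :: "nat \<Rightarrow> nat list \<Rightarrow> nat \<Rightarrow> nat list \<Rightarrow> nat" where
  "protQ p xs r as = xs!0 + (\<Sum>m<length as. (p - as!m) + xaF p xs m * (dgt p r m mod p) + (dgt p r m div p) * (dgt p r m mod p))"
definition protO :: "nat \<Rightarrow> nat \<Rightarrow> nat \<Rightarrow> nat \<Rightarrow> nat list \<Rightarrow> nat" where
  "protO p y q r bs = q + (\<Sum>m<length bs. bs!m + (dgt p r m div p) * ybF y m)"

lemma tuples_nth: assumes "xs \<in> tuples p N" "j < N" shows "xs!j < p"
proof -
  have "xs!j \<in> set xs" using assms by (simp add: tuples_def)
  then show ?thesis using assms(1) by (auto simp: tuples_def)
qed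

lemma sum_mod_cong:
  fixes f g :: "nat \<Rightarrow> nat"
  assumes "\<And>m. m \<in> A \<Longrightarrow> f m mod p = g m mod p"
  shows "sum f A mod p = sum g A mod p"
proof -
  have "sum f A mod p = (\<Sum>m\<in>A. f m mod p) mod p" by (simp only: mod_sum_eq)
  also have "\<dots> = (\<Sum>m\<in>A. g m mod p) mod p" using assms by (simp cong: sum.cong)
  also have "\<dots> = sum g A mod p" by (simp only: mod_sum_eq)
  finally show ?thesis .
qed

lemma h_cong:
  fixes a b xa yb s t p :: nat
  assumes "a < p"
  shows "(b + (p - a) + ((xa + s) mod p) * ((yb + t) mod p)) mod p
       = (((p - a) + xa * t + s * t) + (b + s * yb) + xa * yb) mod p"
proof -
  have "(b + (p - a) + ((xa + s) mod p) * ((yb + t) mod p)) mod p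
      = (b + (p - a) + (xa + s) * (yb + t)) mod p"
    by (metis mod_add_right_eq mod_mult_eq)
  also have "b + (p - a) + (xa + s) * (yb + t) = ((p - a) + xa * t + s * t) + (b + s * yb) + xa * yb"
    by (simp add: algebra_simps)
  finally show ?thesis .
qed

lemma xsum_cong:
  fixes xs :: "nat list" and p i M :: nat
  assumes xs: "xs \<in> tuples p (Suc M)" and i: "i < Suc M"
  shows "(xs!0) mod p = (xs!i + (\<Sum>m<M. xaF p xs m * ybF i m)) mod p"
proof (cases i)
  case 0
  then show ?thesis by (simp add: ybF_def)
next
  case (Suc m0)
  then have m0: "m0 < M" using i by simp
  have xi: "xs!i < p" using tuples_nth[OF xs i] .
  have "(\<Sum>m<M. xaF p xs m * ybF i m) = (\<Sum>m<M. if m = m0 then xaF p xs m0 else 0)"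
    by (intro sum.cong refl) (auto simp: ybF_def Suc)
  also have "\<dots> = xaF p xs m0" using m0 by simp
  finally have s: "(\<Sum>m<M. xaF p xs m * ybF i m) = xaF p xs m0" .
  have "(xs!i + xaF p xs m0) mod p = (xs!i + (xs!0 + (p - xs!i))) mod p"
    unfolding xaF_def Suc by (simp add: mod_add_right_eq)
  also have "xs!i + (xs!0 + (p - xs!i)) = xs!0 + p" using xi by simp
  finally show ?thesis using s by simp
qed

lemma prot_eq:
  fixes p M :: nat and xs :: "nat list"
  assumes p: "p > 0" and xs: "xs \<in> tuples p (Suc M)" and i: "i < Suc M" and v: "v < p"
  shows "prot_out_prob p P M ((p*p)^M) (\<lambda>r. 1 / real ((p*p)^M)) (protA p) (protQ p) (protB p) (protO p) xs i v
       = cv p M (\<lambda>m. Dm p P (xaF p xs m) (ybF i m)) ((v + p - xs!i) mod p)"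
proof -
  define X where "X = (\<lambda>m e. (xaF p xs m + e div p) mod p)"
  define Y where "Y = (\<lambda>m e. (ybF i m + e mod p) mod p)"
  define h where "h = (\<lambda>m e a b. b + (p - a) + X m e * Y m e)"
  define g where "g = (\<lambda>m e a b. 1 / (real p * real p) * P a b (X m e) (Y m e))"
  define z where "z = (v + p - xs!i) mod p"
  have zp: "z < p" using p by (simp add: z_def)
  have xip: "xs!i < p" using tuples_nth[OF xs i] .
  have pt: "1 / real ((p*p)^M) * (let q = protQ p xs r as mod p in
         if protO p i q r bs mod p = v then
           (\<Prod>m<M. P (as ! m) (bs ! m) (protA p xs r (take m as) mod p) (protB p i q r (take m bs) mod p))
         else 0)
      = (if (\<Sum>m<M. h m (r div (p*p)^m mod (p*p)) (as!m) (bs!m)) mod p = z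
         then (\<Prod>m<M. g m (r div (p*p)^m mod (p*p)) (as!m) (bs!m)) else 0)"
    if as: "as \<in> tuples p M" and bs: "bs \<in> tuples p M" for r as bs
  proof -
    have las: "length as = M" and lbs: "length bs = M" using as bs unfolding tuples_def by auto
    have asp: "as!m < p" if "m < M" for m using tuples_nth[OF as that] .
    define s where "s = (\<lambda>m. dgt p r m div p)"
    define t where "t = (\<lambda>m. dgt p r m mod p)"
    define al where "al = (\<lambda>m. (p - as!m) + xaF p xs m * t m + s m * t m)"
    define be where "be = (\<lambda>m. bs!m + s m * ybF i m)"
    have hm: "h m (dgt p r m) (as!m) (bs!m) mod p = (al m + be m + xaF p xs m * ybF i m) mod p"
      if "m < M" for m
      unfolding h_def X_def Y_def al_def be_def s_def t_def
      using h_cong[OF asp[OF that], of "bs!m" "xaF p xs m" "dgt p r m div p" "ybF i m" "dgt p r m mod p"]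
      by simp
    have S1: "(\<Sum>m<M. h m (dgt p r m) (as!m) (bs!m)) mod p
        = ((\<Sum>m<M. al m) + (\<Sum>m<M. be m) + (\<Sum>m<M. xaF p xs m * ybF i m)) mod p"
      using sum_mod_cong[of "{..<M}" "\<lambda>m. h m (dgt p r m) (as!m) (bs!m)" p
          "\<lambda>m. al m + be m + xaF p xs m * ybF i m"] hm
      by (simp add: sum.distrib)
    have O: "protO p i (protQ p xs r as mod p) r bs mod p = (xs!0 + (\<Sum>m<M. al m) + (\<Sum>m<M. be m)) mod p"
      unfolding protO_def protQ_def lbs las al_def be_def s_def t_def
      by (simp add: mod_add_left_eq)
    also have "\<dots> = (xs!i + (\<Sum>m<M. xaF p xs m * ybF i m) + ((\<Sum>m<M. al m) + (\<Sum>m<M. be m))) mod p"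
      using mod_add_cong[OF xsum_cong[OF xs i], of "(\<Sum>m<M. al m) + (\<Sum>m<M. be m)"]
      by (simp add: add.assoc)
    also have "\<dots> = (xs!i + ((\<Sum>m<M. al m) + (\<Sum>m<M. be m) + (\<Sum>m<M. xaF p xs m * ybF i m))) mod p"
      by (simp add: algebra_simps)
    also have "\<dots> = (xs!i + (\<Sum>m<M. h m (dgt p r m) (as!m) (bs!m))) mod p"
      using S1 by (metis mod_add_right_eq)
    finally have O2: "protO p i (protQ p xs r as mod p) r bs mod p = (xs!i + (\<Sum>m<M. h m (dgt p r m) (as!m) (bs!m))) mod p" .
    have cond: "(protO p i (protQ p xs r as mod p) r bs mod p = v)
        = ((\<Sum>m<M. h m (dgt p r m) (as!m) (bs!m)) mod p = z)"
      unfolding O2 z_def using mod_eq_shift[OF v, of "xs!i"] xip by simp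
    have prodeq: "1 / real ((p*p)^M) * (\<Prod>m<M. P (as ! m) (bs ! m) (protA p xs r (take m as) mod p) (protB p i q r (take m bs) mod p))
        = (\<Prod>m<M. g m (dgt p r m) (as!m) (bs!m))" for q
    proof -
      have "(\<Prod>m<M. P (as ! m) (bs ! m) (protA p xs r (take m as) mod p) (protB p i q r (take m bs) mod p))
          = (\<Prod>m<M. P (as ! m) (bs ! m) (X m (dgt p r m)) (Y m (dgt p r m)))"
        by (intro prod.cong refl) (simp add: protA_def protB_def las lbs X_def Y_def)
      moreover have "(\<Prod>m<M. g m (dgt p r m) (as!m) (bs!m))
          = (1 / (real p * real p)) ^ M * (\<Prod>m<M. P (as ! m) (bs ! m) (X m (dgt p r m)) (Y m (dgt p r m)))"
        unfolding g_def prod.distrib prod_constant card_lessThan ..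
      ultimately show ?thesis by (simp add: power_divide)
    qed
    show ?thesis
      unfolding Let_def cond using prodeq by (simp add: dgt_def)
  qed
  have "prot_out_prob p P M ((p*p)^M) (\<lambda>r. 1 / real ((p*p)^M)) (protA p) (protQ p) (protB p) (protO p) xs i v
      = (\<Sum>r<(p*p)^M. \<Sum>as\<in>tuples p M. \<Sum>bs\<in>tuples p M.
          if (\<Sum>m<M. h m (r div (p*p)^m mod (p*p)) (as!m) (bs!m)) mod p = z
          then (\<Prod>m<M. g m (r div (p*p)^m mod (p*p)) (as!m) (bs!m)) else 0)"
    unfolding prot_out_prob_def sum_distrib_left
    by (intro sum.cong refl) (rule pt)
  also have "\<dots> = cv p M (\<lambda>m d. \<Sum>e<p*p. \<Sum>a<p. \<Sum>b<p. if h m e a b mod p = d then g m e a b else 0) z"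
    by (rule conv_sum) (use p zp in auto)
  also have "(\<lambda>m d. \<Sum>e<p*p. \<Sum>a<p. \<Sum>b<p. if h m e a b mod p = d then g m e a b else 0)
      = (\<lambda>m. Dm p P (xaF p xs m) (ybF i m))"
    unfolding Dm_def h_def g_def X_def Y_def by (simp only:)
  finally show ?thesis unfolding z_def .
qed

lemma g_cont:
  assumes "a < 1"
  shows "continuous_on {a..1} (\<lambda>x::real. (1-x) * log 2 (1-x))"
proof -
  have "continuous (at x within {a..1}) (\<lambda>x::real. (1-x) * log 2 (1-x))" if x: "x \<in> {a..1}" for x
  proof (cases "x < 1")
    case True
    have "isCont (\<lambda>x::real. (1-x) * log 2 (1-x)) x"
      using True by (auto intro!: continuous_intros simp: log_def)
    then show ?thesis by (rule continuous_at_imp_continuous_at_within)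
  next
    case False
    then have x1: "x = 1" using x by simp
    have lim: "((\<lambda>x::real. (1-x) * log 2 (1-x)) \<longlongrightarrow> 0) (at_left 1)"
      unfolding log_def by real_asymp
    show ?thesis unfolding x1 continuous_within at_within_Icc_at_left[OF assms] using lim by simp
  qed
  then show ?thesis using continuous_on_eq_continuous_within by blast
qed

lemma T_cont:
  assumes "a > 0" "a < 1"
  shows "continuous_on {a..1} (T_p p)"
proof -
  have c1: "continuous_on {a..1} (\<lambda>x::real. x * log 2 x)"
    using assms by (auto intro!: continuous_intros simp: log_def)
  have "T_p p = (\<lambda>x. - (x * log 2 x) - (1-x) * log 2 (1-x) + (1-x) * log 2 (real p - 1))"
    unfolding T_p_def bin_entropy_def by (auto simp: fun_eq_iff)
  then show ?thesis using c1 g_cont[OF assms(2)]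
    by (auto intro!: continuous_intros)
qed

lemma T_deriv_num:
  assumes "0 < x" "x < 1"
  shows "((\<lambda>x. - (x * ln x) - (1-x) * ln (1-x) + (1-x) * c) has_real_derivative (ln (1-x) - ln x - c)) (at x)"
  using assms
  apply (intro derivative_eq_intros refl)
  apply auto
  done

lemma T_deriv:
  assumes "p \<ge> 2" "1 / real p < x" "x < 1"
  shows "DERIV (T_p p) x :> (ln (1-x) - ln x - ln (real p - 1)) / ln 2"
proof -
  have "1 / real p > 0" using assms by simp
  then have x0: "x > 0" using assms(2) by linarith
  have eq: "T_p p = (\<lambda>x. (- (x * ln x) - (1-x) * ln (1-x) + (1-x) * ln (real p - 1)) / ln 2)"
    unfolding T_p_def bin_entropy_def log_def by (auto simp: fun_eq_iff diff_divide_distrib add_divide_distrib)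
  show ?thesis unfolding eq
    by (rule DERIV_cdivide[OF T_deriv_num[OF x0 assms(3)]])
qed

lemma T_strict:
  assumes p: "p \<ge> 2" and ab: "1 / real p \<le> a" "a < b" "b \<le> 1"
  shows "T_p p a > T_p p b"
proof (rule DERIV_neg_imp_decreasing_open[OF ab(2)])
  have p0: "1 / real p > 0" "1 / real p < 1" using p by auto
  show "continuous_on {a..b} (T_p p)"
    using T_cont[OF p0] by (rule continuous_on_subset) (use ab in auto)
  fix x assume x: "a < x" "x < b"
  then have x1: "1 / real p < x" "x < 1" using ab by auto
  have x0: "x > 0" using x1 p0 by linarith
  have "1 - x < x * (real p - 1)"
    using x1(1) p by (simp add: field_simps)
  then have "ln (1 - x) < ln (x * (real p - 1))" using x1 p by (simp add: ln_less_cancel_iff x0)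
  then have "ln (1-x) - ln x - ln (real p - 1) < 0" using x0 p by (simp add: ln_mult)
  then show "\<exists>y. DERIV (T_p p) x :> y \<and> y < 0"
    using T_deriv[OF p x1] by (intro exI[of _ "(ln (1-x) - ln x - ln (real p - 1)) / ln 2"]) (simp add: divide_neg_pos)
qed

lemma T_one: "T_p p 1 = 0"
  unfolding T_p_def bin_entropy_def by simp

lemma T_low:
  assumes p: "p \<ge> 2"
  shows "T_p p (1 / real p) = log 2 (real p)"
proof -
  have p0: "real p > 0" "real p - 1 > 0" using p by auto
  define L where "L = log 2 (real p)"
  define K where "K = log 2 (real p - 1)"
  define q where "q = 1 / real p"
  have e1: "1 - q = (real p - 1) / real p" using p0 by (simp add: q_def field_simps)
  have l1: "log 2 (1 - q) = K - L"
    unfolding e1 K_def L_def using p0 by (simp add: log_divide)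
  have l2: "log 2 q = - L" unfolding q_def L_def using p0 by (simp add: log_divide)
  have "T_p p q = - q * (- L) - (1 - q) * (K - L) + (1 - q) * K"
    unfolding T_p_def bin_entropy_def l1 l2 K_def by simp
  also have "\<dots> = L * (q + (1 - q))" by (simp add: algebra_simps)
  also have "\<dots> = L" by simp
  finally show ?thesis unfolding q_def L_def .
qed

lemma Tinv_bound:
  assumes p: "p \<ge> 2" and t: "0 \<le> t" "t \<le> log 2 (real p)" and x: "x \<le> 1" and tx: "t \<le> T_p p x"
  shows "x \<le> T_p_inv p t"
proof -
  have p0: "1 / real p > 0" "1 / real p < 1" using p by auto
  have "\<exists>y. 1 / real p \<le> y \<and> y \<le> 1 \<and> T_p p y = t"
    by (rule IVT2'[OF _ _ _ T_cont[OF p0]]) (use t T_one T_low[OF p] p0 in simp_all)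
  then obtain y where y: "1 / real p \<le> y" "y \<le> 1" "T_p p y = t" by blast
  have uniq: "z = y" if "z \<in> {1 / real p .. 1} \<and> T_p p z = t" for z
  proof (rule ccontr)
    assume "z \<noteq> y"
    then consider "z < y" | "y < z" by linarith
    then show False
    proof cases
      case 1
      then have "T_p p z > T_p p y" using T_strict[OF p _ 1 y(2)] that by simp
      then show False using that y(3) by simp
    next
      case 2
      then have "T_p p y > T_p p z" using T_strict[OF p y(1) 2] that by simp
      then show False using that y(3) by simp
    qed
  qed
  have "T_p_inv p t = y"
    unfolding T_p_inv_def
  proof (rule the_equality)
    show "y \<in> {1 / real p..1} \<and> T_p p y = t" using y by simp
  next
    fix z assume "z \<in> {1 / real p..1} \<and> T_p p z = t"
    then show "z = y" by (rule uniq)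
  qed
  show ?thesis
  proof (cases "x \<le> 1 / real p")
    case True then show ?thesis using y \<open>T_p_inv p t = y\<close> by linarith
  next
    case False
    show ?thesis
    proof (rule ccontr)
      assume "\<not> x \<le> T_p_inv p t"
      then have "y < x" using \<open>T_p_inv p t = y\<close> by simp
      then have "T_p p y > T_p p x" using T_strict[OF p y(1) _ x] by blast
      then show False using y tx by simp
    qed
  qed
qed

theorem theorem2:
  fixes p :: nat and P :: "nat \<Rightarrow> nat \<Rightarrow> nat \<Rightarrow> nat \<Rightarrow> real" and N c :: nat
  assumes "prime p"
    and "is_box p P"
    and "no_signalling p P"
    and "info_causality p P"
    and "1 \<le> N" and "N \<le> p"
    and "c < p"
  shows "(1 / of_nat p) * (\<Sum>k<p. omega p ^ (c * k) *
            (\<Sum>j<p. complex_of_real (mu p P j) * omega p ^ (j * k)) ^ (N - 1))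
         \<le> complex_of_real (T_p_inv p ((real N - 1) / real N * log 2 (real p)))"
proof -
  have p2: "p \<ge> 2" using assms(1) by (rule prime_ge_2_nat)
  then have p0: "p > 0" and p1: "p > 1" by auto
  have box: "is_box p P" by fact
  define M where "M = N - 1"
  have NM: "N = Suc M" using assms(5) unfolding M_def by simp
  define nu where "nu = cv p M (\<lambda>m. mu p P)"
  have mu_nn: "mu p P d \<ge> 0" for d
  proof -
    have "\<And>x y k. x < p \<Longrightarrow> y < p \<Longrightarrow> k < p \<Longrightarrow> 0 \<le> P k (nat ((int k - int x * int y + int d) mod int p)) x y"
      using box p0 unfolding is_box_def by (simp add: nat_less_iff)
    then have "0 \<le> (\<Sum>x<p. \<Sum>y<p. \<Sum>k<p. P k (nat ((int k - int x * int y + int d) mod int p)) x y)"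
      by (intro sum_nonneg) auto
    then show ?thesis unfolding mu_def by simp
  qed
  have mu_D: "mu p P d = Dm p P 0 0 d" if "d < p" for d using D_mu[OF p0 that] by simp
  have mu_sum: "(\<Sum>d<p. mu p P d) = 1"
    using D_sum[OF p0 box, of 0 0] mu_D by simp
  have nu_nn: "nu z \<ge> 0" for z unfolding nu_def by (rule cv_nonneg) (rule mu_nn)
  have nu_sum: "(\<Sum>z<p. nu z) = 1" unfolding nu_def cv_sum[OF p0] mu_sum by simp
  define R where "R = (p*p)^M"
  define w where "w = (\<lambda>r::nat. 1 / real R)"
  have R0: "R > 0" using p0 by (simp add: R_def)
  have prot: "prot_out_prob p P M R w (protA p) (protQ p) (protB p) (protO p) xs i v = nu ((v + p - xs!i) mod p)"
    if xs: "xs \<in> tuples p N" and i: "i < N" and v: "v < p" for xs i v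
  proof -
    have "prot_out_prob p P M R w (protA p) (protQ p) (protB p) (protO p) xs i v
        = cv p M (\<lambda>m. Dm p P (xaF p xs m) (ybF i m)) ((v + p - xs!i) mod p)"
      unfolding R_def w_def using prot_eq[OF p0 _ _ v, of xs M i P] xs i NM by simp
    also have "\<dots> = nu ((v + p - xs!i) mod p)"
      unfolding nu_def by (rule cv_cong) (simp add: D_mu[OF p0])
    finally show ?thesis .
  qed
  have joint: "ic_joint p P N M R w (protA p) (protQ p) (protB p) (protO p) i u v = nu ((v + p - u) mod p) / real p"
    if i: "i < N" and u: "u < p" and v: "v < p" for i u v
  proof -
    have "ic_joint p P N M R w (protA p) (protQ p) (protB p) (protO p) i u v
       = 1 / real p ^ N * (\<Sum>xs\<in>tuples p N. if xs!i = u then nu ((v + p - u) mod p) else 0)"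
      unfolding ic_joint_def using prot[OF _ i v] by (intro arg_cong[where f="\<lambda>x. 1 / real p ^ N * x"] sum.cong refl) auto
    also have "\<dots> = 1 / real p ^ N * (nu ((v + p - u) mod p) * real p ^ (N - 1))"
      using fiber_sum[OF i u] by simp
    also have "\<dots> = nu ((v + p - u) mod p) / real p"
      using p0 NM by (simp add: field_simps)
    finally show ?thesis .
  qed
  have mi: "mutual_info p (ic_joint p P N M R w (protA p) (protQ p) (protB p) (protO p) i) = log 2 (real p) - Hent p nu"
    if i: "i < N" for i
    by (rule mi_shift[OF p0 nu_nn nu_sum]) (rule joint[OF i])
  have ic: "(\<Sum>i<N. mutual_info p (ic_joint p P N M R w (protA p) (protQ p) (protB p) (protO p) i)) \<le> log 2 (real p)"
    using assms(4) assms(5) R0 unfolding info_causality_def w_def by auto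
  then have "real N * (log 2 (real p) - Hent p nu) \<le> log 2 (real p)"
    using mi by simp
  then have Hbound: "(real N - 1) / real N * log 2 (real p) \<le> Hent p nu"
    using assms(5) by (simp add: field_simps)
  define z0 where "z0 = (p - c) mod p"
  have z0p: "z0 < p" using p0 by (simp add: z0_def)
  have grp: "Hent p nu \<le> T_p p (nu z0)"
    by (rule grouping[OF p2 _ nu_sum z0p]) (rule nu_nn)
  have nu1: "nu z0 \<le> 1"
    using member_le_sum[of z0 "{..<p}" nu] nu_nn z0p nu_sum by simp
  have lp: "log 2 (real p) \<ge> 0" using p0 by simp
  have t0: "0 \<le> (real N - 1) / real N * log 2 (real p)"
    using assms(5) lp by simp
  have t1: "(real N - 1) / real N * log 2 (real p) \<le> log 2 (real p)"
  proof -
    have "(real N - 1) / real N \<le> 1" using assms(5) by simp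
    then show ?thesis using lp mult_right_mono[of "(real N - 1) / real N" 1 "log 2 (real p)"] by simp
  qed
  have bound: "nu z0 \<le> T_p_inv p ((real N - 1) / real N * log 2 (real p))"
    by (rule Tinv_bound[OF p2 t0 t1 nu1]) (use Hbound grp in linarith)
  have four: "(\<Sum>j<p. complex_of_real (mu p P j) * omega p ^ (j * k)) ^ (N - 1)
      = (\<Sum>z<p. complex_of_real (nu z) * omega p ^ (z * k))" for k
    unfolding nu_def cv_fourier[OF p0] M_def by simp
  have "(1 / of_nat p) * (\<Sum>k<p. omega p ^ (c * k) *
            (\<Sum>j<p. complex_of_real (mu p P j) * omega p ^ (j * k)) ^ (N - 1))
      = complex_of_real (nu z0)"
    unfolding four z0_def by (rule inversion[OF p1 assms(7)])
  then show ?thesis using bound by (simp add: less_eq_complex_def)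
qed

end
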